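(* Let $X_1,X_2,\dots$ be i.i.d. real-valued random variables with common distribution $F$, let $f_c:\mathbb{R}^2\to\mathbb{R}$ be Borel measurable with $f_c(x,y)=f_c(y,x)$, let $B\subset\mathbb{R}$ be a Borel set, and fix a real number $w$. Set $h_D(x,y)=I_B(f_c(x,y))$, $h_T(x,y,z)=I_B(f_c(x,y))I_B(f_c(y,z))I_B(f_c(z,x))$, $h_V(x,y,z)=I_B(f_c(x,y))I_B(f_c(x,z))$. For $x\in\mathbb{R}$ and $n\ge 1$ define $$T_n(1;x)=\sum_{2\le j<k\le n}h_T(x,X_j,X_k),\qquad V_n(1;x)=\sum_{2\le j<k\le n}h_V(x,X_j,X_k),$$ $$C_n(1;x)=\frac{T_n(1;x)}{V_n(1;x)}I_{\{V_n(1;x)\ge 1\}}+w\, I_{\{V_n(1;x)=0\}},$$ and let $C_n(1)=C_n(1;X_1)$ (this is the local clustering coefficient of vertex $1$ in the random graph on vertices $1,\dots,n$ where $i\ne j$ are adjacent iff $f_c(X_i,X_j)\in B$, with value $w$ when vertex $1$ has degree $0$ or $1$). Further define $E_D(x)=\int_{\mathbb{R}}h_D(x,y)F(dy)$, $E_T(x)=\int_{\mathbb{R}}\int_{\mathbb{R}}h_T(x,y,z)F(dy)F(dz)$, $$C(1;x)=\frac{E_T(x)}{E_D(x)^2}I_{\{E_D(x)>0\}}+w\,I_{\{E_D(x)=0\}},$$ and $C(1)=C(1;X_1)$. Then as $n\to\infty$: (i) for every $x\in\mathbb{R}$, $C_n(1;x)\to C(1;x)$ almost surely; (ii) $C_n(1)\to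 C(1)$ almost surely.
   Context: $I_A$ denotes the indicator function of the set $A$. *)

theory Defs
  imports "HOL-Probability.Probability"
begin

definition hD :: "(real \<Rightarrow> real \<Rightarrow> real) \<Rightarrow> real set \<Rightarrow> real \<Rightarrow> real \<Rightarrow> real" where
  "hD fc B x y = indicator B (fc x y)"

definition hT :: "(real \<Rightarrow> real \<Rightarrow> real) \<Rightarrow> real set \<Rightarrow> real \<Rightarrow> real \<Rightarrow> real \<Rightarrow> real" where
  "hT fc B x y z = indicator B (fc x y) * indicator B (fc y z) * indicator B (fc z x)"

definition hV :: "(real \<Rightarrow> real \<Rightarrow> real) \<Rightarrow> real set \<Rightarrow> real \<Rightarrow> real \<Rightarrow> real \<Rightarrow> real" where
  "hV fc B x y z = indicator B (fc x y) * indicator B (fc x z)"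

definition Tn :: "(real \<Rightarrow> real \<Rightarrow> real) \<Rightarrow> real set \<Rightarrow> (nat \<Rightarrow> 'a \<Rightarrow> real) \<Rightarrow> nat \<Rightarrow> real \<Rightarrow> 'a \<Rightarrow> real" where
  "Tn fc B X n x \<omega> = (\<Sum>j\<in>{2..n}. \<Sum>k\<in>{j<..n}. hT fc B x (X j \<omega>) (X k \<omega>))"

definition Vn :: "(real \<Rightarrow> real \<Rightarrow> real) \<Rightarrow> real set \<Rightarrow> (nat \<Rightarrow> 'a \<Rightarrow> real) \<Rightarrow> nat \<Rightarrow> real \<Rightarrow> 'a \<Rightarrow> real" where
  "Vn fc B X n x \<omega> = (\<Sum>j\<in>{2..n}. \<Sum>k\<in>{j<..n}. hV fc B x (X j \<omega>) (X k \<omega>))"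

definition Cn :: "(real \<Rightarrow> real \<Rightarrow> real) \<Rightarrow> real set \<Rightarrow> real \<Rightarrow> (nat \<Rightarrow> 'a \<Rightarrow> real) \<Rightarrow> nat \<Rightarrow> real \<Rightarrow> 'a \<Rightarrow> real" where
  "Cn fc B w X n x \<omega> =
     Tn fc B X n x \<omega> / Vn fc B X n x \<omega> * indicator {1..} (Vn fc B X n x \<omega>)
     + w * indicator {0} (Vn fc B X n x \<omega>)"

definition ED :: "(real \<Rightarrow> real \<Rightarrow> real) \<Rightarrow> real set \<Rightarrow> real measure \<Rightarrow> real \<Rightarrow> real" where
  "ED fc B F x = (\<integral>y. hD fc B x y \<partial>F)"

definition ET :: "(real \<Rightarrow> real \<Rightarrow> real) \<Rightarrow> real set \<Rightarrow> real measure \<Rightarrow> real \<Rightarrow> real" where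
  "ET fc B F x = (\<integral>z. (\<integral>y. hT fc B x y z \<partial>F) \<partial>F)"

definition Clim :: "(real \<Rightarrow> real \<Rightarrow> real) \<Rightarrow> real set \<Rightarrow> real \<Rightarrow> real measure \<Rightarrow> real \<Rightarrow> real" where
  "Clim fc B w F x =
     ET fc B F x / (ED fc B F x)\<^sup>2 * indicator {0<..} (ED fc B F x)
     + w * indicator {0} (ED fc B F x)"

end

theory Submission
  imports Defs "HOL-Library.Discrete_Functions" "HOL-Real_Asymp.Real_Asymp"
begin

lemma Nformula_pos:
  fixes N :: "nat \<Rightarrow> real"
  assumes N: "\<And>n. n \<ge> 1 \<Longrightarrow> N n = (real n - 1) * (real n - 2) / 2"
  shows "n \<ge> 3 \<Longrightarrow> N n > 0"
proof -
  assume n: "n \<ge> 3"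
  then have "real n - 1 > 0" "real n - 2 > 0" by auto
  then have "(real n - 1) * (real n - 2) > 0" by (rule mult_pos_pos)
  moreover have e: "N n = (real n - 1) * (real n - 2) / 2" using n by (intro N) auto
  ultimately show ?thesis by simp
qed

lemma Nformula_mono:
  fixes N :: "nat \<Rightarrow> real"
  assumes N: "\<And>n. n \<ge> 1 \<Longrightarrow> N n = (real n - 1) * (real n - 2) / 2"
  shows "2 \<le> m \<Longrightarrow> m \<le> n \<Longrightarrow> N m \<le> N n"
proof -
  assume "2 \<le> m" "m \<le> n"
  then have "real m - 1 \<le> real n - 1" "real m - 2 \<le> real n - 2" "0 \<le> real m - 1" "0 \<le> real m - 2" by auto
  then have "(real m - 1) * (real m - 2) \<le> (real n - 1) * (real n - 2)"
    by (intro mult_mono) auto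
  then show ?thesis using N[of m] N[of n] \<open>2 \<le> m\<close> \<open>m \<le> n\<close> by simp
qed

lemma sandwich_sq:
  fixes a :: "nat \<Rightarrow> real" and N :: "nat \<Rightarrow> real"
  assumes mono: "\<And>m n. m \<le> n \<Longrightarrow> a m \<le> a n" and nn: "\<And>n. 0 \<le> a n"
    and N: "\<And>n. n \<ge> 1 \<Longrightarrow> N n = (real n - 1) * (real n - 2) / 2"
    and lim: "(\<lambda>k. a (k^2) / N (k^2)) \<longlonglongrightarrow> L"
  shows "(\<lambda>n. a n / N n) \<longlonglongrightarrow> L"
proof -
  define r where "r n = floor_sqrt n" for n
  define u where "u k = a (k^2) / N (k^2)" for k
  define \<rho> where "\<rho> k = N (k^2) / N ((Suc k)^2)" for k
  have r: "filterlim r at_top at_top"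
    unfolding filterlim_at_top
  proof
    fix Z
    show "eventually (\<lambda>n. Z \<le> r n) at_top"
      using eventually_ge_at_top[of "Z^2"] by eventually_elim (simp add: r_def le_floor_sqrtI)
  qed
  have rhoev: "eventually (\<lambda>k. \<rho> k = ((real k)^2 - 1) * ((real k)^2 - 2) / (((1 + real k)^2 - 1) * ((1 + real k)^2 - 2))) at_top"
    using eventually_ge_at_top[of "1::nat"]
  proof eventually_elim
    case (elim k)
    have "k^2 \<ge> 1" "(Suc k)^2 \<ge> 1" using elim by (auto simp: power2_eq_square)
    then show ?case unfolding \<rho>_def N[OF \<open>k^2 \<ge> 1\<close>] N[OF \<open>(Suc k)^2 \<ge> 1\<close>]
      by (simp add: of_nat_power)
  qed
  moreover have rholim: "(\<lambda>k::nat. ((real k)^2 - 1) * ((real k)^2 - 2) / (((1 + real k)^2 - 1) * ((1 + real k)^2 - 2))) \<longlonglongrightarrow> 1"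
  proof -
    have "((\<lambda>x::real. (x^2 - 1) * (x^2 - 2) / (((1 + x)^2 - 1) * ((1 + x)^2 - 2))) \<longlongrightarrow> 1) at_top"
      by real_asymp
    from filterlim_compose[OF this filterlim_real_sequentially] show ?thesis by (simp add: o_def)
  qed
  have rho: "\<rho> \<longlonglongrightarrow> 1"
    using tendsto_cong[OF rhoev] rholim by simp
  have u: "u \<longlonglongrightarrow> L" using lim unfolding u_def .
  have uS: "(\<lambda>k. u (Suc k)) \<longlonglongrightarrow> L" using u by (rule LIMSEQ_Suc)
  have lo: "(\<lambda>n. u (r n) * \<rho> (r n)) \<longlonglongrightarrow> L"
    using filterlim_compose[OF tendsto_mult[OF u rho] r] by (simp add: o_def)
  have hi: "(\<lambda>n. u (Suc (r n)) / \<rho> (r n)) \<longlonglongrightarrow> L"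
    using filterlim_compose[OF tendsto_divide[OF uS rho] r] by (simp add: o_def)
  have ev: "eventually (\<lambda>n. u (r n) * \<rho> (r n) \<le> a n / N n \<and> a n / N n \<le> u (Suc (r n)) / \<rho> (r n)) at_top"
    using eventually_ge_at_top[of "9::nat"]
  proof eventually_elim
    case (elim n)
    have r3: "r n \<ge> 3" using elim by (simp add: r_def le_floor_sqrtI)
    have le1: "(r n)^2 \<le> n" by (simp add: r_def)
    have le2: "n \<le> (Suc (r n))^2" using Suc_floor_sqrt_power2_gt[of n] by (simp add: r_def)
    have sq3: "(r n)^2 \<ge> 3"
    proof -
      have "3^2 \<le> (r n)^2" using r3 by (intro power_mono) auto
      then show ?thesis by simp
    qed
    have P1: "N ((r n)^2) > 0" using Nformula_pos[OF N] sq3 by blast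
    have P2: "N n > 0" using Nformula_pos[OF N] elim by simp
    have P3: "N ((Suc (r n))^2) > 0" using Nformula_pos[OF N] sq3 le1 le2 by simp
    have M1: "N ((r n)^2) \<le> N n" using Nformula_mono[OF N] sq3 le1 by simp
    have M2: "N n \<le> N ((Suc (r n))^2)" using Nformula_mono[OF N] le2 elim by simp
    have A1: "a ((r n)^2) \<le> a n" "a n \<le> a ((Suc (r n))^2)" using mono le1 le2 by auto
    have e1: "u (r n) * \<rho> (r n) = a ((r n)^2) / N ((Suc (r n))^2)"
      unfolding u_def \<rho>_def using P1 P3 by simp
    have e2: "u (Suc (r n)) / \<rho> (r n) = a ((Suc (r n))^2) / N ((r n)^2)"
      unfolding u_def \<rho>_def using P1 P3 by simp
    have "a ((r n)^2) / N ((Suc (r n))^2) \<le> a n / N ((Suc (r n))^2)"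
      using A1 P3 by (simp add: divide_right_mono)
    also have "\<dots> \<le> a n / N n"
      using P2 M2 nn[of n] by (intro divide_left_mono) auto
    finally have i1: "a ((r n)^2) / N ((Suc (r n))^2) \<le> a n / N n" .
    have "a n / N n \<le> a n / N ((r n)^2)"
      using P1 M1 nn[of n] by (intro divide_left_mono) auto
    also have "\<dots> \<le> a ((Suc (r n))^2) / N ((r n)^2)"
      using A1 P1 by (simp add: divide_right_mono)
    finally have i2: "a n / N n \<le> a ((Suc (r n))^2) / N ((r n)^2)" .
    show ?case using i1 i2 e1 e2 by simp
  qed
  show ?thesis
    using ev by (intro tendsto_sandwich[OF _ _ lo hi]) (auto elim: eventually_mono)
qed

locale ustat = prob_space M for M :: "'a measure" +
  fixes X :: "nat \<Rightarrow> 'a \<Rightarrow> real" and F :: "real measure" and \<psi> :: "real \<Rightarrow> real"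
  assumes indep: "indep_vars (\<lambda>_. borel) X {1..}"
    and law: "\<And>i. 1 \<le> i \<Longrightarrow> distr M borel (X i) = F"
    and Xm[measurable]: "\<And>i. X i \<in> borel_measurable M"
    and \<psi>m[measurable]: "\<psi> \<in> borel_measurable borel"
begin

definition Y0 :: "'a \<Rightarrow> real" where "Y0 \<omega> = \<psi> (X 1 \<omega>)"

lemma Y0m[measurable]: "Y0 \<in> borel_measurable M"
  unfolding Y0_def by measurable

lemma F_prob: "prob_space F"
proof -
  have "prob_space (distr M borel (X 1))" by (rule prob_space_distr) simp
  then show ?thesis using law[of 1] by simp
qed

lemma sets_F[measurable_cong]: "sets F = sets borel"
  using law[of 1] by auto

lemma space_F: "space F = UNIV"
  using sets_F by (metis sets_eq_imp_space_eq space_borel)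

lemma pair_law:
  assumes "1 \<le> k" "1 \<le> l" "k \<noteq> l"
  shows "distr M (borel \<Otimes>\<^sub>M borel) (\<lambda>\<omega>. (X k \<omega>, X l \<omega>)) = F \<Otimes>\<^sub>M F"
proof -
  have "indep_var borel ((\<lambda>f. f k) \<circ> (\<lambda>\<omega>. restrict (\<lambda>i. X i \<omega>) {k}))
                  borel ((\<lambda>f. f l) \<circ> (\<lambda>\<omega>. restrict (\<lambda>i. X i \<omega>) {l}))"
    using assms by (intro indep_var_compose[OF indep_var_restrict[OF indep]]) auto
  also have "((\<lambda>f. f k) \<circ> (\<lambda>\<omega>. restrict (\<lambda>i. X i \<omega>) {k})) = X k" by auto
  also have "((\<lambda>f. f l) \<circ> (\<lambda>\<omega>. restrict (\<lambda>i. X i \<omega>) {l})) = X l" by auto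
  finally have "indep_var borel (X k) borel (X l)" .
  then have "distr M borel (X k) \<Otimes>\<^sub>M distr M borel (X l) = distr M (borel \<Otimes>\<^sub>M borel) (\<lambda>\<omega>. (X k \<omega>, X l \<omega>))"
    using indep_var_distribution_eq by blast
  then show ?thesis
    using law assms by simp
qed

lemma one_law:
  assumes "2 \<le> j"
  shows "distr M (borel \<Otimes>\<^sub>M borel) (\<lambda>\<omega>. (Y0 \<omega>, X j \<omega>)) = distr M borel Y0 \<Otimes>\<^sub>M F"
proof -
  have "indep_var borel ((\<lambda>f. \<psi> (f 1)) \<circ> (\<lambda>\<omega>. restrict (\<lambda>i. X i \<omega>) {1}))
                  borel ((\<lambda>f. f j) \<circ> (\<lambda>\<omega>. restrict (\<lambda>i. X i \<omega>) {j}))"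
    using assms by (intro indep_var_compose[OF indep_var_restrict[OF indep]]) auto
  also have "((\<lambda>f. \<psi> (f 1)) \<circ> (\<lambda>\<omega>. restrict (\<lambda>i. X i \<omega>) {1})) = Y0" by (auto simp: Y0_def)
  also have "((\<lambda>f. f j) \<circ> (\<lambda>\<omega>. restrict (\<lambda>i. X i \<omega>) {j})) = X j" by auto
  finally have "indep_var borel Y0 borel (X j)" .
  then have "distr M borel Y0 \<Otimes>\<^sub>M distr M borel (X j) = distr M (borel \<Otimes>\<^sub>M borel) (\<lambda>\<omega>. (Y0 \<omega>, X j \<omega>))"
    using indep_var_distribution_eq by blast
  then show ?thesis
    using law assms by simp
qed

lemma split_indep:
  assumes "2 \<le> i" "2 \<le> j" "2 \<le> k" "2 \<le> l" "k \<noteq> i" "k \<noteq> j" "l \<noteq> i" "l \<noteq> j"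
  shows "indep_var (borel \<Otimes>\<^sub>M (borel \<Otimes>\<^sub>M borel)) (\<lambda>\<omega>. (Y0 \<omega>, (X i \<omega>, X j \<omega>)))
                   (borel \<Otimes>\<^sub>M (borel \<Otimes>\<^sub>M borel)) (\<lambda>\<omega>. (0, (X k \<omega>, X l \<omega>)))"
proof -
  have "indep_var (borel \<Otimes>\<^sub>M (borel \<Otimes>\<^sub>M borel)) ((\<lambda>f. (\<psi> (f 1), (f i, f j))) \<circ> (\<lambda>\<omega>. restrict (\<lambda>i. X i \<omega>) {1, i, j}))
                  (borel \<Otimes>\<^sub>M (borel \<Otimes>\<^sub>M borel)) ((\<lambda>f. (0, (f k, f l))) \<circ> (\<lambda>\<omega>. restrict (\<lambda>i. X i \<omega>) {k, l}))"
    using assms by (intro indep_var_compose[OF indep_var_restrict[OF indep]]) auto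
  also have "((\<lambda>f. (\<psi> (f 1), (f i, f j))) \<circ> (\<lambda>\<omega>. restrict (\<lambda>i. X i \<omega>) {1, i, j})) = (\<lambda>\<omega>. (Y0 \<omega>, (X i \<omega>, X j \<omega>)))"
    by (auto simp: Y0_def)
  also have "((\<lambda>f. (0, (f k, f l))) \<circ> (\<lambda>\<omega>. restrict (\<lambda>i. X i \<omega>) {k, l})) = (\<lambda>\<omega>. (0::real, (X k \<omega>, X l \<omega>)))" by auto
  finally show ?thesis .
qed

end

locale ukernel = ustat +
  fixes g :: "real \<Rightarrow> real \<Rightarrow> real \<Rightarrow> real"
  assumes gm: "(\<lambda>(x, y, z). g x y z) \<in> borel_measurable (borel \<Otimes>\<^sub>M (borel \<Otimes>\<^sub>M borel))"
    and g0: "\<And>x y z. 0 \<le> g x y z" and g1: "\<And>x y z. g x y z \<le> 1"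
begin

lemma g_comp[measurable (raw)]:
  assumes [measurable]: "f1 \<in> borel_measurable N" "f2 \<in> borel_measurable N" "f3 \<in> borel_measurable N"
  shows "(\<lambda>\<omega>. g (f1 \<omega>) (f2 \<omega>) (f3 \<omega>)) \<in> borel_measurable N"
proof -
  have "(\<lambda>\<omega>. (f1 \<omega>, (f2 \<omega>, f3 \<omega>))) \<in> measurable N (borel \<Otimes>\<^sub>M (borel \<Otimes>\<^sub>M borel))" by measurable
  from measurable_comp[OF this gm] show ?thesis by (simp add: o_def)
qed

interpretation FF: pair_prob_space F F
  using F_prob by (simp add: pair_prob_space_def pair_sigma_finite_def prob_space_imp_sigma_finite)

definition \<theta> :: "real \<Rightarrow> real" where "\<theta> x = (\<integral>q. g x (fst q) (snd q) \<partial>(F \<Otimes>\<^sub>M F))"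

lemma \<theta>m[measurable]: "\<theta> \<in> borel_measurable borel"
  unfolding \<theta>_def by measurable

lemma g_int_FF: "integrable (F \<Otimes>\<^sub>M F) (\<lambda>q. g x (fst q) (snd q))"
  by (rule FF.P.integrable_const_bound[where B=1]) (auto simp: g0 g1 abs_le_iff intro: order_trans[OF _ g0])

lemma \<theta>0: "0 \<le> \<theta> x" unfolding \<theta>_def by (rule Bochner_Integration.integral_nonneg) (simp add: g0)
lemma \<theta>1: "\<theta> x \<le> 1" unfolding \<theta>_def by (intro FF.P.integral_le_const g_int_FF) (simp add: g1)

lemma theta_cross: "(\<integral>q. (g x (fst q) (snd q) - \<theta> x) \<partial>(F \<Otimes>\<^sub>M F)) = 0"
  using g_int_FF[of x] by (simp add: \<theta>_def FF.P.prob_space)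

definition a :: "nat \<times> nat \<Rightarrow> 'a \<Rightarrow> real" where
  "a p \<omega> = g (Y0 \<omega>) (X (fst p) \<omega>) (X (snd p) \<omega>) - \<theta> (Y0 \<omega>)"

lemma am[measurable]: "a p \<in> borel_measurable M"
  unfolding a_def by measurable

lemma a_bound: "\<bar>a p \<omega>\<bar> \<le> 1"
  using g0 g1 \<theta>0 \<theta>1 unfolding a_def abs_le_iff
  by (smt (verit))

lemma aa_int: "integrable M (\<lambda>\<omega>. a p \<omega> * a q \<omega>)"
proof (rule integrable_const_bound[where B=1])
  show "AE \<omega> in M. norm (a p \<omega> * a q \<omega>) \<le> 1"
    using a_bound[of p] a_bound[of q] by (intro AE_I2) (auto simp: abs_mult intro!: mult_le_one)
qed simp

lemma cross_zero:
  assumes "2 \<le> i" "2 \<le> j" "2 \<le> k" "2 \<le> l" "k \<noteq> i" "k \<noteq> j" "l \<noteq> i" "l \<noteq> j" "k \<noteq> l"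
  shows "(\<integral>\<omega>. a (i, j) \<omega> * a (k, l) \<omega> \<partial>M) = 0"
proof -
  define S where "S = (borel \<Otimes>\<^sub>M (borel \<Otimes>\<^sub>M borel) :: (real \<times> real \<times> real) measure)"
  define W1 where "W1 \<omega> = (Y0 \<omega>, (X i \<omega>, X j \<omega>))" for \<omega>
  define W2 where "W2 \<omega> = (0::real, (X k \<omega>, X l \<omega>))" for \<omega>
  have W1m[measurable]: "W1 \<in> measurable M S" unfolding W1_def S_def by measurable
  have W2m[measurable]: "W2 \<in> measurable M S" unfolding W2_def S_def by measurable
  define \<Phi> where "\<Phi> w = (g (fst (fst w)) (fst (snd (fst w))) (snd (snd (fst w))) - \<theta> (fst (fst w))) *
      (g (fst (fst w)) (fst (snd (snd w))) (snd (snd (snd w))) - \<theta> (fst (fst w)))" for w :: "(real \<times> real \<times> real) \<times> (real \<times> real \<times> real)"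
  have \<Phi>m[measurable]: "\<Phi> \<in> borel_measurable (S \<Otimes>\<^sub>M S)" unfolding \<Phi>_def S_def by measurable
  define L1 where "L1 = distr M S W1"
  define L2 where "L2 = distr M S W2"
  have ind: "indep_var S W1 S W2"
    unfolding S_def W1_def W2_def using split_indep assms by blast
  then have joint: "L1 \<Otimes>\<^sub>M L2 = distr M (S \<Otimes>\<^sub>M S) (\<lambda>\<omega>. (W1 \<omega>, W2 \<omega>))"
    unfolding L1_def L2_def using indep_var_distribution_eq by blast
  interpret L: pair_prob_space L1 L2
    unfolding L1_def L2_def
    by (simp add: pair_prob_space_def pair_sigma_finite_def prob_space_imp_sigma_finite prob_space_distr)
  have inner: "(\<integral>w2. \<Phi> (w1, w2) \<partial>L2) = 0" for w1
  proof -
    define x where "x = fst w1"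
    define c where "c = g (fst w1) (fst (snd w1)) (snd (snd w1)) - \<theta> (fst w1)"
    have "(\<integral>w2. \<Phi> (w1, w2) \<partial>L2) = (\<integral>w2. c * (g x (fst (snd w2)) (snd (snd w2)) - \<theta> x) \<partial>L2)"
      by (simp add: \<Phi>_def c_def x_def)
    also have "\<dots> = c * (\<integral>w2. (g x (fst (snd w2)) (snd (snd w2)) - \<theta> x) \<partial>L2)"
      by simp
    also have "(\<integral>w2. (g x (fst (snd w2)) (snd (snd w2)) - \<theta> x) \<partial>L2) = (\<integral>\<omega>. (g x (X k \<omega>) (X l \<omega>) - \<theta> x) \<partial>M)"
      unfolding L2_def by (subst integral_distr[OF W2m]) (auto simp: W2_def S_def)
    also have "\<dots> = (\<integral>q. (g x (fst q) (snd q) - \<theta> x) \<partial>distr M (borel \<Otimes>\<^sub>M borel) (\<lambda>\<omega>. (X k \<omega>, X l \<omega>)))"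
      by (subst integral_distr) auto
    also have "\<dots> = 0"
      using pair_law[of k l] assms theta_cross by simp
    finally show ?thesis by simp
  qed
  have int\<Phi>: "integrable (L1 \<Otimes>\<^sub>M L2) \<Phi>"
  proof (rule L.P.integrable_const_bound[where B=1])
    show "AE w in L1 \<Otimes>\<^sub>M L2. norm (\<Phi> w) \<le> 1"
    proof (rule AE_I2)
      fix w :: "(real \<times> real \<times> real) \<times> (real \<times> real \<times> real)"
      have "\<bar>g (fst (fst w)) (fst (snd (fst w))) (snd (snd (fst w))) - \<theta> (fst (fst w))\<bar> \<le> 1"
        "\<bar>g (fst (fst w)) (fst (snd (snd w))) (snd (snd (snd w))) - \<theta> (fst (fst w))\<bar> \<le> 1"
        using g0 g1 \<theta>0 \<theta>1 unfolding abs_le_iff by (smt (verit))+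
      then show "norm (\<Phi> w) \<le> 1" unfolding \<Phi>_def by (auto simp: abs_mult intro: mult_le_one)
    qed
    show "\<Phi> \<in> borel_measurable (L1 \<Otimes>\<^sub>M L2)"
      using \<Phi>m unfolding L1_def L2_def by (simp add: measurable_cong_sets[OF sets_pair_measure_cong[OF sets_distr sets_distr]])
  qed
  have "(\<integral>\<omega>. a (i, j) \<omega> * a (k, l) \<omega> \<partial>M) = (\<integral>\<omega>. \<Phi> (W1 \<omega>, W2 \<omega>) \<partial>M)"
    by (simp add: a_def \<Phi>_def W1_def W2_def)
  also have "\<dots> = (\<integral>w. \<Phi> w \<partial>distr M (S \<Otimes>\<^sub>M S) (\<lambda>\<omega>. (W1 \<omega>, W2 \<omega>)))"
    by (subst integral_distr) auto
  also have "\<dots> = (\<integral>w. \<Phi> w \<partial>(L1 \<Otimes>\<^sub>M L2))" by (simp add: joint)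
  also have "\<dots> = (\<integral>w1. (\<integral>w2. \<Phi> (w1, w2) \<partial>L2) \<partial>L1)"
    using L.integral_fst'[OF int\<Phi>] by simp
  also have "\<dots> = 0" by (simp add: inner)
  finally show ?thesis .
qed

definition P :: "nat \<Rightarrow> (nat \<times> nat) set" where "P n = Sigma {2..n} (\<lambda>j. {j<..n})"

lemma P_finite[simp]: "finite (P n)" unfolding P_def by auto

lemma P_mem: "p \<in> P n \<Longrightarrow> 2 \<le> fst p \<and> fst p < snd p \<and> snd p \<le> n"
  unfolding P_def by auto

definition D :: "nat \<Rightarrow> 'a \<Rightarrow> real" where "D n \<omega> = (\<Sum>p\<in>P n. a p \<omega>)"

lemma Dm[measurable]: "D n \<in> borel_measurable M"
  unfolding D_def by measurable

lemma overlap_card: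
  assumes "p \<in> P n"
  shows "card {q \<in> P n. \<not> (fst q \<notin> {fst p, snd p} \<and> snd q \<notin> {fst p, snd p})} \<le> 4 * (n + 1)"
proof -
  let ?A = "({fst p, snd p} \<times> {..n}) \<union> ({..n} \<times> {fst p, snd p})"
  have sub: "{q \<in> P n. \<not> (fst q \<notin> {fst p, snd p} \<and> snd q \<notin> {fst p, snd p})} \<subseteq> ?A"
    using P_mem by fastforce
  have "card {q \<in> P n. \<not> (fst q \<notin> {fst p, snd p} \<and> snd q \<notin> {fst p, snd p})} \<le> card ?A"
    by (intro card_mono sub) auto
  also have "\<dots> \<le> card ({fst p, snd p} \<times> {..n}) + card ({..n} \<times> {fst p, snd p})"
    by (rule card_Un_le)
  also have "\<dots> \<le> 2 * (n + 1) + (n + 1) * 2"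
    unfolding card_cartesian_product
    by (intro add_mono mult_mono) (auto simp: card_insert_le_m1 card_le_Suc0_iff_eq)
  finally show ?thesis by simp
qed

lemma sum_row:
  assumes p: "p \<in> P n"
  shows "(\<Sum>q\<in>P n. \<integral>\<omega>. a p \<omega> * a q \<omega> \<partial>M) \<le> 4 * (real n + 1)"
proof -
  let ?O = "{q \<in> P n. \<not> (fst q \<notin> {fst p, snd p} \<and> snd q \<notin> {fst p, snd p})}"
  have "(\<Sum>q\<in>P n. \<integral>\<omega>. a p \<omega> * a q \<omega> \<partial>M) \<le> (\<Sum>q\<in>P n. if q \<in> ?O then 1 else 0)"
  proof (rule sum_mono)
    fix q assume q: "q \<in> P n"
    show "(\<integral>\<omega>. a p \<omega> * a q \<omega> \<partial>M) \<le> (if q \<in> ?O then 1 else 0)"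
    proof (cases "q \<in> ?O")
      case True
      have "(\<integral>\<omega>. a p \<omega> * a q \<omega> \<partial>M) \<le> 1"
      proof (rule integral_le_const[OF aa_int], rule AE_I2)
        fix \<omega>
        have "\<bar>a p \<omega> * a q \<omega>\<bar> \<le> 1" using a_bound[of p \<omega>] a_bound[of q \<omega>]
          by (auto simp: abs_mult intro!: mult_le_one)
        then show "a p \<omega> * a q \<omega> \<le> 1" by simp
      qed
      then show ?thesis using True by simp
    next
      case False
      obtain i j where pij: "p = (i, j)" by (cases p)
      obtain k l where qkl: "q = (k, l)" by (cases q)
      have "(\<integral>\<omega>. a (i, j) \<omega> * a (k, l) \<omega> \<partial>M) = 0"
        using P_mem[OF p] P_mem[OF q] False q pij qkl by (intro cross_zero) auto
      then show ?thesis using False pij qkl by simp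
    qed
  qed
  also have "\<dots> = real (card ?O)"
    by (simp add: sum.If_cases Int_def)
  also have "\<dots> \<le> 4 * (real n + 1)"
    using overlap_card[OF p] by (simp add: of_nat_mono)
  finally show ?thesis .
qed

lemma D_sq: "(\<integral>\<omega>. (D n \<omega>)^2 \<partial>M) \<le> real (card (P n)) * (4 * (real n + 1))"
proof -
  have "(\<integral>\<omega>. (D n \<omega>)^2 \<partial>M) = (\<integral>\<omega>. (\<Sum>p\<in>P n. \<Sum>q\<in>P n. a p \<omega> * a q \<omega>) \<partial>M)"
    by (simp add: D_def power2_eq_square sum_product)
  also have "\<dots> = (\<Sum>p\<in>P n. \<Sum>q\<in>P n. \<integral>\<omega>. a p \<omega> * a q \<omega> \<partial>M)"
    by (simp add: integral_sum integrable_sum aa_int)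
  also have "\<dots> \<le> (\<Sum>p\<in>P n. 4 * (real n + 1))"
    by (rule sum_mono) (rule sum_row)
  also have "\<dots> = real (card (P n)) * (4 * (real n + 1))" by simp
  finally show ?thesis .
qed

lemma card_P: "n \<ge> 1 \<Longrightarrow> real (card (P n)) = (real n - 1) * (real n - 2) / 2"
proof (induction n)
  case 0 then show ?case by simp
next
  case (Suc n)
  show ?case
  proof (cases "n = 0")
    case True
    then have "P (Suc n) = {}" unfolding P_def by auto
    then show ?thesis using True by simp
  next
    case False
    have "P (Suc n) = P n \<union> {2..n} \<times> {Suc n}"
      unfolding P_def by auto
    moreover have "P n \<inter> {2..n} \<times> {Suc n} = {}" unfolding P_def by auto
    ultimately have "card (P (Suc n)) = card (P n) + card ({2..n} \<times> {Suc n})"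
      by (simp add: card_Un_disjoint)
    also have "card ({2..n} \<times> {Suc n}) = n - 1"
      by (simp add: card_cartesian_product)
    finally have "real (card (P (Suc n))) = real (card (P n)) + (real n - 1)"
      using False by (simp add: of_nat_diff)
    then show ?thesis using Suc False by (simp add: field_simps)
  qed
qed

lemma bound_sq: "4 * (real (k^2) + 1) / real (card (P (k^2))) \<le> 64 / (real k)^2"
proof (cases "k \<ge> 2")
  case False
  then have "k = 0 \<or> k = 1" by auto
  then have "P (k^2) = {}" unfolding P_def by auto
  then show ?thesis by simp
next
  case True
  define m where "m = real (k^2)"
  have m4: "m \<ge> 4"
  proof -
    have "2^2 \<le> k^2" using True by (intro power_mono) auto
    then have "(4::nat) \<le> k^2" by simp
    from of_nat_mono[OF this, where 'a=real] show ?thesis unfolding m_def by simp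
  qed
  have "k^2 \<ge> 1" using True by (intro one_le_power) simp
  then have N: "real (card (P (k^2))) = (m - 1) * (m - 2) / 2" unfolding m_def by (rule card_P)
  have Npos: "(m - 1) * (m - 2) > 0" using m4 by (intro mult_pos_pos) auto
  have key: "0 \<le> (m - 4) * (28 * m + 12)" using m4 by (intro mult_nonneg_nonneg) auto
  have "4 * (m + 1) / ((m - 1) * (m - 2) / 2) \<le> 64 / m"
    using Npos m4 key by (simp add: field_simps)
  moreover have "4 * (real (k^2) + 1) / real (card (P (k^2))) = 4 * (m + 1) / ((m - 1) * (m - 2) / 2)"
    by (simp only: N m_def)
  moreover have "64 / (real k)^2 = 64 / m" by (simp add: m_def)
  ultimately show ?thesis by simp
qed

lemma D_int: "integrable M (\<lambda>\<omega>. (D n \<omega>)^2)"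
  unfolding D_def power2_eq_square sum_product
  by (intro Bochner_Integration.integrable_sum) (rule aa_int)

lemma DN_sq: "(\<integral>\<omega>. (D n \<omega> / real (card (P n)))^2 \<partial>M) \<le> 4 * (real n + 1) / real (card (P n))"
proof (cases "card (P n) = 0")
  case True then show ?thesis by simp
next
  case False
  let ?N = "real (card (P n))"
  have Np: "?N > 0" using False by (metis of_nat_0_less_iff gr0I)
  have "(\<integral>\<omega>. (D n \<omega> / ?N)^2 \<partial>M) = (\<integral>\<omega>. (D n \<omega>)^2 \<partial>M) / ?N^2"
    by (simp add: power_divide)
  also have "\<dots> \<le> (?N * (4 * (real n + 1))) / ?N^2"
    using D_sq[of n] Np by (intro divide_right_mono) auto
  also have "\<dots> = 4 * (real n + 1) / ?N" using Np by (simp add: power2_eq_square)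
  finally show ?thesis .
qed

lemma D_lim: "AE \<omega> in M. (\<lambda>k. D (k^2) \<omega> / real (card (P (k^2)))) \<longlonglongrightarrow> 0"
proof -
  define f where "f k \<omega> = (D (k^2) \<omega> / real (card (P (k^2))))^2" for k \<omega>
  define c where "c k = 64 * inverse ((real k)^2)" for k
  have fm[measurable]: "f k \<in> borel_measurable M" for k unfolding f_def by measurable
  have f0: "0 \<le> f k \<omega>" for k \<omega> unfolding f_def by simp
  have fint: "integrable M (f k)" for k
    unfolding f_def power_divide using D_int by simp
  have fE: "(\<integral>\<omega>. f k \<omega> \<partial>M) \<le> c k" for k
    using DN_sq[of "k^2"] bound_sq[of k] unfolding f_def c_def by (simp add: divide_inverse)
  have cs: "summable c" unfolding c_def using inverse_power_summable[of 2, where 'a=real]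
    by (intro summable_mult) simp
  have c0: "0 \<le> c k" for k unfolding c_def by simp
  have "(\<integral>\<^sup>+\<omega>. (\<Sum>k. ennreal (f k \<omega>)) \<partial>M) = (\<Sum>k. \<integral>\<^sup>+\<omega>. ennreal (f k \<omega>) \<partial>M)"
    by (rule nn_integral_suminf) simp
  also have "\<dots> = (\<Sum>k. ennreal (\<integral>\<omega>. f k \<omega> \<partial>M))"
    by (intro suminf_cong nn_integral_eq_integral fint) (simp add: f0)
  also have "\<dots> \<le> (\<Sum>k. ennreal (c k))"
    by (intro suminf_le summableI) (simp add: fE ennreal_leI)
  also have "\<dots> < \<infinity>"
    using ennreal_suminf_neq_top[OF cs c0] by (simp add: less_top)
  finally have "(\<integral>\<^sup>+\<omega>. (\<Sum>k. ennreal (f k \<omega>)) \<partial>M) \<noteq> \<infinity>" by simp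
  then have "AE \<omega> in M. (\<Sum>k. ennreal (f k \<omega>)) \<noteq> \<infinity>"
    by (intro nn_integral_PInf_AE) simp
  then show ?thesis
  proof (rule AE_mp, intro AE_I2 impI)
    fix \<omega> assume "(\<Sum>k. ennreal (f k \<omega>)) \<noteq> \<infinity>"
    then have "summable (\<lambda>k. f k \<omega>)" by (intro summable_suminf_not_top f0) simp
    then have "(\<lambda>k. f k \<omega>) \<longlonglongrightarrow> 0" by (rule summable_LIMSEQ_zero)
    then have "(\<lambda>k. sqrt (f k \<omega>)) \<longlonglongrightarrow> sqrt 0" by (rule tendsto_real_sqrt)
    then have "(\<lambda>k. norm (D (k^2) \<omega> / real (card (P (k^2))))) \<longlonglongrightarrow> 0"
      by (simp only: f_def real_sqrt_abs real_sqrt_zero real_norm_def)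
    then show "(\<lambda>k. D (k^2) \<omega> / real (card (P (k^2)))) \<longlonglongrightarrow> 0"
      by (rule tendsto_norm_zero_cancel)
  qed
qed

definition S :: "nat \<Rightarrow> 'a \<Rightarrow> real" where
  "S n \<omega> = (\<Sum>j\<in>{2..n}. \<Sum>k\<in>{j<..n}. g (Y0 \<omega>) (X j \<omega>) (X k \<omega>))"

lemma S_P: "S n \<omega> = (\<Sum>p\<in>P n. g (Y0 \<omega>) (X (fst p) \<omega>) (X (snd p) \<omega>))"
  unfolding S_def P_def by (subst sum.Sigma) (auto simp: case_prod_beta)

lemma D_S: "D n \<omega> = S n \<omega> - real (card (P n)) * \<theta> (Y0 \<omega>)"
  unfolding D_def a_def S_P by (simp add: sum_subtractf)

lemma S_mono: "m \<le> n \<Longrightarrow> S m \<omega> \<le> S n \<omega>"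
  unfolding S_P by (intro sum_mono2) (auto simp: P_def g0)

lemma S_nonneg: "0 \<le> S n \<omega>"
  unfolding S_P by (intro sum_nonneg) (simp add: g0)

lemma KL: "AE \<omega> in M. (\<lambda>n. S n \<omega> / real (card (P n))) \<longlonglongrightarrow> \<theta> (Y0 \<omega>)"
  using D_lim
proof (rule AE_mp, intro AE_I2 impI)
  fix \<omega> assume lim: "(\<lambda>k. D (k^2) \<omega> / real (card (P (k^2)))) \<longlonglongrightarrow> 0"
  have ev: "eventually (\<lambda>k. D (k^2) \<omega> / real (card (P (k^2))) + \<theta> (Y0 \<omega>) = S (k^2) \<omega> / real (card (P (k^2)))) sequentially"
    using eventually_ge_at_top[of "2::nat"]
  proof eventually_elim
    case (elim k)
    have "k^2 \<ge> 4"
    proof -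
      have "2^2 \<le> k^2" using elim by (intro power_mono) auto
      then show ?thesis by simp
    qed
    then have m4: "real (k^2) \<ge> 4" using of_nat_mono[of 4 "k^2", where 'a=real] by simp
    have "real (card (P (k^2))) = (real (k^2) - 1) * (real (k^2) - 2) / 2"
      using \<open>k^2 \<ge> 4\<close> by (intro card_P) simp
    moreover have "(real (k^2) - 1) * (real (k^2) - 2) > 0" using m4 by (intro mult_pos_pos) auto
    ultimately have "real (card (P (k^2))) > 0" by simp
    then show ?case by (auto simp: D_S diff_divide_distrib)
  qed
  have "(\<lambda>k. D (k^2) \<omega> / real (card (P (k^2))) + \<theta> (Y0 \<omega>)) \<longlonglongrightarrow> 0 + \<theta> (Y0 \<omega>)"
    by (intro tendsto_add lim tendsto_const)
  then have "(\<lambda>k. S (k^2) \<omega> / real (card (P (k^2)))) \<longlonglongrightarrow> \<theta> (Y0 \<omega>)"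
    using tendsto_cong[OF ev] by simp
  then show "(\<lambda>n. S n \<omega> / real (card (P n))) \<longlonglongrightarrow> \<theta> (Y0 \<omega>)"
    by (intro sandwich_sq[where N="\<lambda>n. real (card (P n))"] S_mono S_nonneg card_P)
qed

end

lemma zero_or_ge1:
  fixes f :: "'i \<Rightarrow> real"
  assumes "finite A" "\<And>i. i \<in> A \<Longrightarrow> f i = 0 \<or> f i \<ge> 1"
  shows "sum f A = 0 \<or> sum f A \<ge> 1"
proof (cases "\<forall>i\<in>A. f i = 0")
  case True then show ?thesis by simp
next
  case False
  then obtain i where i: "i \<in> A" "f i \<ge> 1" using assms(2) by auto
  have "f i \<le> sum f A"
  proof (rule member_le_sum)
    fix x assume "x \<in> A - {i}"
    then show "0 \<le> f x" using assms(2)[of x] by auto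
  qed (use assms i in auto)
  then show ?thesis using i by simp
qed

lemma Vn_int: "Vn fc B X n x \<omega> = 0 \<or> Vn fc B X n x \<omega> \<ge> 1"
  unfolding Vn_def
  by (intro zero_or_ge1) (auto simp: hV_def indicator_def)

lemma assemble:
  fixes T V N :: "nat \<Rightarrow> real"
  assumes T: "(\<lambda>n. T n / N n) \<longlonglongrightarrow> et" and V: "(\<lambda>n. V n / N n) \<longlonglongrightarrow> ed^2"
    and ed0: "ed \<ge> 0" and Npos: "eventually (\<lambda>n. N n > 0) sequentially"
    and Vint: "\<And>n. V n = 0 \<or> V n \<ge> 1"
    and Vzero: "ed = 0 \<Longrightarrow> \<forall>n. V n = 0"
  shows "(\<lambda>n. T n / V n * indicator {1..} (V n) + w * indicator {0} (V n))
          \<longlonglongrightarrow> et / ed^2 * indicator {0<..} ed + w * indicator {0} ed"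
proof (cases "ed = 0")
  case True
  then show ?thesis using Vzero by simp
next
  case False
  then have edp: "ed^2 > 0" using ed0 by simp
  have "eventually (\<lambda>n. V n / N n > 0) sequentially"
    using order_tendstoD(1)[OF V edp] .
  then have ev: "eventually (\<lambda>n. (T n / N n) / (V n / N n) = T n / V n * indicator {1..} (V n) + w * indicator {0} (V n)) sequentially"
    using Npos
  proof eventually_elim
    case (elim n)
    then have "V n > 0" by (simp add: zero_less_divide_iff)
    then have "V n \<ge> 1" using Vint[of n] by auto
    then show ?case using elim by (simp add: indicator_def)
  qed
  have "(\<lambda>n. (T n / N n) / (V n / N n)) \<longlonglongrightarrow> et / ed^2"
    using edp by (intro tendsto_divide T V) auto
  then have "(\<lambda>n. T n / V n * indicator {1..} (V n) + w * indicator {0} (V n)) \<longlonglongrightarrow> et / ed^2"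
    using tendsto_cong[OF ev] by simp
  then show ?thesis using False ed0 by (simp add: indicator_def)
qed

locale ufc = ustat +
  fixes fc :: "real \<Rightarrow> real \<Rightarrow> real" and B :: "real set"
  assumes fcm[measurable]: "(\<lambda>(x, y). fc x y) \<in> borel_measurable (borel \<Otimes>\<^sub>M borel)"
    and Bm[measurable]: "B \<in> sets borel"
begin

lemma hT_m: "(\<lambda>(x, y, z). hT fc B x y z) \<in> borel_measurable (borel \<Otimes>\<^sub>M (borel \<Otimes>\<^sub>M borel))"
  unfolding hT_def by measurable

lemma hV_m: "(\<lambda>(x, y, z). hV fc B x y z) \<in> borel_measurable (borel \<Otimes>\<^sub>M (borel \<Otimes>\<^sub>M borel))"
  unfolding hV_def by measurable

sublocale T: ukernel M X F \<psi> "hT fc B"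
  by unfold_locales (auto simp: hT_m hT_def indicator_def)

sublocale V: ukernel M X F \<psi> "hV fc B"
  by unfold_locales (auto simp: hV_m hV_def indicator_def)

interpretation FF2: pair_prob_space F F
  using F_prob by (simp add: pair_prob_space_def pair_sigma_finite_def prob_space_imp_sigma_finite)

lemma ind_int: "integrable F (\<lambda>y. indicator B (fc x y) :: real)"
proof -
  show ?thesis by (rule FF2.M1.integrable_const_bound[where B=1]) (auto simp: indicator_def)
qed

lemma EDm[measurable]: "ED fc B F \<in> borel_measurable borel"
proof -
  have "(\<lambda>x. \<integral>y. (indicator B (fc x y) :: real) \<partial>F) \<in> borel_measurable borel"
    by (rule FF2.M1.borel_measurable_lebesgue_integral) measurable
  then show ?thesis unfolding ED_def hD_def by simp
qed

lemma ED0: "0 \<le> ED fc B F x"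
  unfolding ED_def hD_def by (rule Bochner_Integration.integral_nonneg) simp

lemma thetaT: "T.\<theta> x = ET fc B F x"
proof -
  have "integrable (F \<Otimes>\<^sub>M F) (\<lambda>q. hT fc B x (fst q) (snd q))" by (rule T.g_int_FF)
  then have i: "integrable (F \<Otimes>\<^sub>M F) (case_prod (\<lambda>y z. hT fc B x y z))" by (simp add: split_beta')
  show ?thesis unfolding T.\<theta>_def ET_def using FF2.integral_snd[OF i] by (simp add: split_beta')
qed

lemma thetaV: "V.\<theta> x = (ED fc B F x)^2"
proof -
  have "integrable (F \<Otimes>\<^sub>M F) (\<lambda>q. hV fc B x (fst q) (snd q))" by (rule V.g_int_FF)
  then have i: "integrable (F \<Otimes>\<^sub>M F) (case_prod (\<lambda>y z. hV fc B x y z))" by (simp add: split_beta')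
  have "V.\<theta> x = (\<integral>z. (\<integral>y. hV fc B x y z \<partial>F) \<partial>F)"
    unfolding V.\<theta>_def using FF2.integral_snd[OF i] by (simp add: split_beta')
  also have "\<dots> = (\<integral>z. ED fc B F x * indicator B (fc x z) \<partial>F)"
    unfolding hV_def ED_def hD_def using ind_int by simp
  also have "\<dots> = (ED fc B F x)^2"
    using ind_int by (simp add: ED_def hD_def power2_eq_square)
  finally show ?thesis .
qed

lemma Zlemma: "AE \<omega> in M. ED fc B F (Y0 \<omega>) = 0 \<longrightarrow> (\<forall>j\<ge>2. indicator B (fc (Y0 \<omega>) (X j \<omega>)) = (0::real))"
proof -
  define \<phi> where "\<phi> q = (if ED fc B F (fst q) = 0 then indicator B (fc (fst q) (snd q)) else 0 :: real)" for q
  have \<phi>m[measurable]: "\<phi> \<in> borel_measurable (borel \<Otimes>\<^sub>M borel)" unfolding \<phi>_def by measurable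
  have "AE \<omega> in M. \<phi> (Y0 \<omega>, X j \<omega>) = 0" if j: "j \<ge> 2" for j
  proof -
    define G where "G = distr M borel Y0"
    interpret G: prob_space G unfolding G_def by (rule prob_space_distr) simp
    interpret GF: pair_prob_space G F
      by (simp add: pair_prob_space_def pair_sigma_finite_def prob_space_imp_sigma_finite G.prob_space_axioms F_prob)
    have sets_G[measurable_cong]: "sets G = sets borel" unfolding G_def by simp
    have intGF: "integrable (G \<Otimes>\<^sub>M F) \<phi>"
      by (rule GF.P.integrable_const_bound[where B=1]) (auto simp: \<phi>_def indicator_def)
    have int: "integrable M (\<lambda>\<omega>. \<phi> (Y0 \<omega>, X j \<omega>))"
      by (rule integrable_const_bound[where B=1]) (auto simp: \<phi>_def indicator_def)
    have "(\<integral>\<omega>. \<phi> (Y0 \<omega>, X j \<omega>) \<partial>M) = (\<integral>q. \<phi> q \<partial>distr M (borel \<Otimes>\<^sub>M borel) (\<lambda>\<omega>. (Y0 \<omega>, X j \<omega>)))"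
      by (subst integral_distr) auto
    also have "\<dots> = (\<integral>q. \<phi> q \<partial>(G \<Otimes>\<^sub>M F))" using one_law[OF j] by (simp add: G_def)
    also have "\<dots> = (\<integral>x. (\<integral>y. \<phi> (x, y) \<partial>F) \<partial>G)"
      using GF.integral_fst'[OF intGF] by simp
    also have "\<dots> = (\<integral>x. 0 \<partial>G)"
    proof (rule Bochner_Integration.integral_cong[OF refl])
      fix x
      show "(\<integral>y. \<phi> (x, y) \<partial>F) = 0"
        by (cases "ED fc B F x = 0") (simp_all add: \<phi>_def ED_def hD_def)
    qed
    finally have "(\<integral>\<omega>. \<phi> (Y0 \<omega>, X j \<omega>) \<partial>M) = 0" by simp
    then show ?thesis
      using integral_nonneg_eq_0_iff_AE[OF int] by (simp add: \<phi>_def indicator_def)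
  qed
  then have "AE \<omega> in M. \<forall>j. j \<ge> 2 \<longrightarrow> \<phi> (Y0 \<omega>, X j \<omega>) = 0"
    by (subst AE_all_countable) auto
  then show ?thesis by eventually_elim (auto simp: \<phi>_def)
qed

lemma core: "AE \<omega> in M. (\<lambda>n. Cn fc B w X n (Y0 \<omega>) \<omega>) \<longlonglongrightarrow> Clim fc B w F (Y0 \<omega>)"
  using T.KL V.KL Zlemma
proof eventually_elim
  case (elim \<omega>)
  let ?x = "Y0 \<omega>"
  have TS: "T.S n \<omega> = Tn fc B X n ?x \<omega>" for n unfolding T.S_def Tn_def ..
  have VS: "V.S n \<omega> = Vn fc B X n ?x \<omega>" for n unfolding V.S_def Vn_def ..
  have PP: "V.P = T.P" unfolding V.P_def T.P_def ..
  have Npos: "eventually (\<lambda>n. real (card (T.P n)) > 0) sequentially"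
    using eventually_ge_at_top[of "3::nat"]
  proof eventually_elim
    case (elim n)
    have "real (card (T.P n)) = (real n - 1) * (real n - 2) / 2" using elim by (intro T.card_P) simp
    moreover have "(real n - 1) * (real n - 2) > 0" using elim by (intro mult_pos_pos) auto
    ultimately show ?case by simp
  qed
  have Vzero: "\<forall>n. Vn fc B X n ?x \<omega> = 0" if "ED fc B F ?x = 0"
    using elim(3) that by (auto simp: Vn_def hV_def intro!: sum.neutral)
  have VI: "\<And>n. Vn fc B X n ?x \<omega> = 0 \<or> Vn fc B X n ?x \<omega> \<ge> 1" by (rule Vn_int)
  show ?case
    unfolding Cn_def Clim_def
    by (rule assemble[where N="\<lambda>n. real (card (T.P n))"])
       (use elim(1) elim(2) TS VS PP thetaT thetaV ED0 Npos Vzero VI in auto)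
qed

end

theorem theorem2:
  fixes M :: "'a measure" and X :: "nat \<Rightarrow> 'a \<Rightarrow> real" and F :: "real measure"
    and fc :: "real \<Rightarrow> real \<Rightarrow> real" and B :: "real set" and w :: real
  assumes "prob_space M"
    and "prob_space.indep_vars M (\<lambda>_. borel) X {1..}"
    and "\<And>i. i \<ge> 1 \<Longrightarrow> distr M borel (X i) = F"
    and "(\<lambda>(x, y). fc x y) \<in> borel_measurable (borel \<Otimes>\<^sub>M borel)"
    and "\<And>x y. fc x y = fc y x"
    and "B \<in> sets borel"
  shows "(\<forall>x. AE \<omega> in M. (\<lambda>n. Cn fc B w X n x \<omega>) \<longlonglongrightarrow> Clim fc B w F x)
       \<and> (AE \<omega> in M. (\<lambda>n. Cn fc B w X n (X 1 \<omega>) \<omega>) \<longlonglongrightarrow> Clim fc B w F (X 1 \<omega>))"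
proof -
  interpret prob_space M by fact
  define X' where "X' i = X (max 1 i)" for i
  have Xm: "X i \<in> borel_measurable M" if "i \<ge> 1" for i
    using assms(2) that unfolding indep_vars_def by auto
  have X'm: "X' i \<in> borel_measurable M" for i unfolding X'_def by (rule Xm) simp
  have ind': "indep_vars (\<lambda>_. borel) X' {1..}"
    using indep_vars_cong[of "{1..}" "{1..}" X' X "\<lambda>_. borel" "\<lambda>_. borel"] assms(2)
    by (simp add: X'_def max_def)
  have law': "distr M borel (X' i) = F" if "i \<ge> 1" for i
    using assms(3)[OF that] that by (simp add: X'_def max_def)
  have Tn_eq: "Tn fc B X n x \<omega> = Tn fc B X' n x \<omega>" for n x \<omega>
    unfolding Tn_def X'_def by (intro sum.cong refl) (auto simp: max_def)
  have Vn_eq: "Vn fc B X n x \<omega> = Vn fc B X' n x \<omega>" for n x \<omega>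
    unfolding Vn_def X'_def by (intro sum.cong refl) (auto simp: max_def)
  have Cn_eq: "Cn fc B w X n x \<omega> = Cn fc B w X' n x \<omega>" for n x \<omega>
    unfolding Cn_def Tn_eq Vn_eq ..
  have U: "ufc M X' F \<psi> fc B" if "\<psi> \<in> borel_measurable borel" for \<psi>
    by unfold_locales (use ind' law' X'm that assms(4) assms(6) in auto)
  have part1: "AE \<omega> in M. (\<lambda>n. Cn fc B w X n x \<omega>) \<longlonglongrightarrow> Clim fc B w F x" for x
  proof -
    interpret U1: ufc M X' F "\<lambda>_. x" fc B by (rule U) simp
    show ?thesis using U1.core[of w] by (simp add: U1.Y0_def Cn_eq)
  qed
  have part2: "AE \<omega> in M. (\<lambda>n. Cn fc B w X n (X 1 \<omega>) \<omega>) \<longlonglongrightarrow> Clim fc B w F (X 1 \<omega>)"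
  proof -
    interpret U2: ufc M X' F "\<lambda>y. y" fc B by (rule U) simp
    show ?thesis using U2.core[of w] by (simp add: U2.Y0_def Cn_eq X'_def)
  qed
  show ?thesis using part1 part2 by blast
qed

end
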